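(* Let $\mathscr C$ and $J$ be as defined below. (i) Let $H$ be a non-trivial rank one subgroup of $\mathbb{R}$. Then $F_H(V):=V\cap H\cap(0,\infty)$, with a morphism $n\in\mathrm{Hom}_{\mathscr C}(V,W)$ acting as multiplication by $n$, defines a flat continuous functor $F_H:\mathscr C\to\mathfrak{Sets}$. (ii) The map $H\mapsto\mathfrak{p}_H$, which associates to a non-trivial rank one subgroup $H\subset\mathbb{R}$ the point of the topos $\mathfrak{Sh}(\mathscr C,J)$ represented by $F_H$, is injective from the set of non-trivial rank one subgroups of $\mathbb{R}$ to the set of isomorphism classes of points of this topos.
   Context: $\mathbb{N}^{\times}$ is the multiplicative monoid of positive integers. $\mathscr C$ is the small category whose objects are the (possibly empty) bounded open subintervals of $[0,\infty)$ (including intervals $[0,a)$), with $\mathrm{Hom}_{\mathscr C}(\Omega,\Omega')=\{n\in\mathbb{N}^{\times}\mid n\Omega\subset\Omega'\}$ for $\Omega\neq\emptyset$, $\mathrm{Hom}_{\mathscr C}(\emptyset,\Omega')$ a singleton, composition being multiplication. $J$ is the Grothendieck topology generated by ordinary open covers of intervals by subintervals. A rank one subgroup of $\mathbb{R}$ is a subgroup isomorphic to a non-zero subgroup of $\mathbb{Q}$. A functor $F:\mathscr C\to\mathfrak{Sets}$ is flat iff it is filtering: (1) $F(C)\neq\emptyset$ for some object $C$; (2) for $a_j\in F(C_j)$, $j=1,2$, there exist an object $C$, $a\in F(C)$ and morphisms $u_j:C\to C_j$ with $F(u_j)a=a_j$; (3) for morphisms $u,v:C\to D$ and $a\in F(C)$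 with $F(u)a=F(v)a$ there exist an object $B$, $b\in F(B)$ and $w:B\to C$ with $u\circ w=v\circ w$ and $F(w)b=a$. A flat functor is continuous iff for every object $U$ and cover $\{U_j\subset U\}$ the maps $F(U_j)\to F(U)$ are jointly surjective. Points of $\mathfrak{Sh}(\mathscr C,J)$ correspond (up to equivalence) to flat continuous functors $\mathscr C\to\mathfrak{Sets}$. *)

theory Defs
  imports Complex_Main
begin

definition add_subgroup :: "'a::ab_group_add set \<Rightarrow> bool" where
  "add_subgroup S \<longleftrightarrow> 0 \<in> S \<and> (\<forall>x\<in>S. \<forall>y\<in>S. x + y \<in> S) \<and> (\<forall>x\<in>S. - x \<in> S)"

definition rank_one_subgroup :: "real set \<Rightarrow> bool" where
  "rank_one_subgroup H \<longleftrightarrow> add_subgroup H \<and>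
     (\<exists>(Q::rat set) (\<phi>::real \<Rightarrow> rat). add_subgroup Q \<and> Q \<noteq> {0} \<and> bij_betw \<phi> H Q \<and>
        (\<forall>x\<in>H. \<forall>y\<in>H. \<phi> (x + y) = \<phi> x + \<phi> y))"

definition C_obj :: "real set \<Rightarrow> bool" where
  "C_obj \<Omega> \<longleftrightarrow> \<Omega> = {} \<or> (\<exists>a b. 0 \<le> a \<and> a < b \<and> \<Omega> = {a<..<b})
                  \<or> (\<exists>b. 0 < b \<and> \<Omega> = {0..<b})"

definition C_hom :: "real set \<Rightarrow> real set \<Rightarrow> nat set" where
  "C_hom \<Omega> \<Omega>' = (if \<Omega> = {} then {1}
                   else {n. 0 < n \<and> (\<lambda>x. real n * x) ` \<Omega> \<subseteq> \<Omega>'})"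

text \<open>Composition u o w of w : B -> C and u : C -> D (multiplication; into the
  singleton hom-set when B is empty).\<close>
definition C_comp :: "real set \<Rightarrow> nat \<Rightarrow> nat \<Rightarrow> nat" where
  "C_comp B u w = (if B = {} then 1 else u * w)"

text \<open>A functor is given by its object part Fo and morphism part Fm, where
  Fm n V W : Fo V -> Fo W is the action of the morphism n : V -> W.\<close>
definition C_functor :: "(real set \<Rightarrow> 'a set) \<Rightarrow> (nat \<Rightarrow> real set \<Rightarrow> real set \<Rightarrow> 'a \<Rightarrow> 'a) \<Rightarrow> bool" where
  "C_functor Fo Fm \<longleftrightarrow>
     (\<forall>V W n x. C_obj V \<longrightarrow> C_obj W \<longrightarrow> n \<in> C_hom V W \<longrightarrow> x \<in> Fo V \<longrightarrow> Fm n V W x \<in> Fo W) \<and>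
     (\<forall>V x. C_obj V \<longrightarrow> x \<in> Fo V \<longrightarrow> Fm 1 V V x = x) \<and>
     (\<forall>U V W n m x. C_obj U \<longrightarrow> C_obj V \<longrightarrow> C_obj W \<longrightarrow> n \<in> C_hom U V \<longrightarrow> m \<in> C_hom V W \<longrightarrow>
        x \<in> Fo U \<longrightarrow> Fm (C_comp U m n) U W x = Fm m V W (Fm n U V x))"

text \<open>Flat = filtering, conditions (1)-(3).\<close>
definition C_flat :: "(real set \<Rightarrow> 'a set) \<Rightarrow> (nat \<Rightarrow> real set \<Rightarrow> real set \<Rightarrow> 'a \<Rightarrow> 'a) \<Rightarrow> bool" where
  "C_flat Fo Fm \<longleftrightarrow>
     (\<exists>C. C_obj C \<and> Fo C \<noteq> {}) \<and>
     (\<forall>C1 C2 a1 a2. C_obj C1 \<longrightarrow> C_obj C2 \<longrightarrow> a1 \<in> Fo C1 \<longrightarrow> a2 \<in> Fo C2 \<longrightarrow>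
        (\<exists>C a u1 u2. C_obj C \<and> a \<in> Fo C \<and> u1 \<in> C_hom C C1 \<and> u2 \<in> C_hom C C2 \<and>
            Fm u1 C C1 a = a1 \<and> Fm u2 C C2 a = a2)) \<and>
     (\<forall>C D u v a. C_obj C \<longrightarrow> C_obj D \<longrightarrow> u \<in> C_hom C D \<longrightarrow> v \<in> C_hom C D \<longrightarrow> a \<in> Fo C \<longrightarrow>
        Fm u C D a = Fm v C D a \<longrightarrow>
        (\<exists>B b w. C_obj B \<and> b \<in> Fo B \<and> w \<in> C_hom B C \<and>
            C_comp B u w = C_comp B v w \<and> Fm w B C b = a))"

definition C_continuous :: "(real set \<Rightarrow> 'a set) \<Rightarrow> (nat \<Rightarrow> real set \<Rightarrow> real set \<Rightarrow> 'a \<Rightarrow> 'a) \<Rightarrow> bool" where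
  "C_continuous Fo Fm \<longleftrightarrow>
     (\<forall>U \<U>. C_obj U \<longrightarrow> (\<forall>V\<in>\<U>. C_obj V \<and> V \<subseteq> U) \<longrightarrow> \<Union>\<U> = U \<longrightarrow>
        (\<forall>x\<in>Fo U. \<exists>V\<in>\<U>. \<exists>y\<in>Fo V. Fm 1 V U y = x))"

text \<open>Natural isomorphism of set-valued functors on C (isomorphism of the
  corresponding points of the topos).\<close>
definition C_nat_iso ::
  "(real set \<Rightarrow> 'a set) \<Rightarrow> (nat \<Rightarrow> real set \<Rightarrow> real set \<Rightarrow> 'a \<Rightarrow> 'a) \<Rightarrow>
   (real set \<Rightarrow> 'b set) \<Rightarrow> (nat \<Rightarrow> real set \<Rightarrow> real set \<Rightarrow> 'b \<Rightarrow> 'b) \<Rightarrow> bool" where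
  "C_nat_iso Fo Fm Go Gm \<longleftrightarrow>
     (\<exists>\<eta>::real set \<Rightarrow> 'a \<Rightarrow> 'b.
        (\<forall>V. C_obj V \<longrightarrow> bij_betw (\<eta> V) (Fo V) (Go V)) \<and>
        (\<forall>V W n x. C_obj V \<longrightarrow> C_obj W \<longrightarrow> n \<in> C_hom V W \<longrightarrow> x \<in> Fo V \<longrightarrow>
            \<eta> W (Fm n V W x) = Gm n V W (\<eta> V x)))"

definition FH_obj :: "real set \<Rightarrow> real set \<Rightarrow> real set" where
  "FH_obj H V = V \<inter> H \<inter> {0<..}"

definition FH_mor :: "nat \<Rightarrow> real set \<Rightarrow> real set \<Rightarrow> real \<Rightarrow> real" where
  "FH_mor n V W x = real n * x"

end

theory Submission imports Defs begin

lemma sub_int_mult: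
  assumes "add_subgroup (H::real set)" "x \<in> H"
  shows "of_int k * x \<in> H"
proof -
  have nat: "real n * x \<in> H" for n
    by (induction n) (use assms in \<open>auto simp: add_subgroup_def distrib_right\<close>)
  show ?thesis
  proof (cases "k \<ge> 0")
    case True
    then show ?thesis using nat[of "nat k"] by simp
  next
    case False
    then have "- (real (nat (-k)) * x) \<in> H" using nat[of "nat (-k)"] assms(1) by (auto simp: add_subgroup_def)
    then show ?thesis using False by simp
  qed
qed

lemma hom_int_mult:
  fixes \<phi> :: "real \<Rightarrow> rat"
  assumes "add_subgroup (H::real set)" "x \<in> H"
    "\<forall>x\<in>H. \<forall>y\<in>H. \<phi> (x + y) = \<phi> x + \<phi> y"
  shows "\<phi> (of_int k * x) = of_int k * \<phi> x"
proof -
  have z: "\<phi> 0 = 0" using assms(1,3) unfolding add_subgroup_def by (metis add.right_neutral add_left_cancel)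
  have nat: "\<phi> (real n * x) = of_nat n * \<phi> x" for n
  proof (induction n)
    case 0 then show ?case using z by simp
  next
    case (Suc n)
    have "real n * x \<in> H" using sub_int_mult[OF assms(1,2), of "int n"] by simp
    then have "\<phi> (real n * x + x) = \<phi> (real n * x) + \<phi> x" using assms by auto
    then show ?case using Suc by (simp add: algebra_simps)
  qed
  have neg: "\<phi> (- y) = - \<phi> y" if "y \<in> H" for y
  proof -
    have "-y \<in> H" using that assms(1) by (auto simp: add_subgroup_def)
    then have "\<phi> (y + -y) = \<phi> y + \<phi> (-y)" using assms that by blast
    then have "0 = \<phi> y + \<phi> (-y)" using z by simp
    then show ?thesis by (simp add: eq_neg_iff_add_eq_0)
  qed
  show ?thesis
  proof (cases "k \<ge> 0")
    case True
    then show ?thesis using nat[of "nat k"] by simp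
  next
    case False
    have "real (nat (-k)) * x \<in> H" using sub_int_mult[OF assms(1,2), of "int (nat (-k))"] by (metis of_int_of_nat_eq)
    then have "\<phi> (- (real (nat (-k)) * x)) = - (of_nat (nat (-k)) * \<phi> x)" using neg nat by simp
    then show ?thesis using False by simp
  qed
qed

lemma common_div:
  assumes R: "rank_one_subgroup H" and xH: "x \<in> H" and yH: "y \<in> H" and xp: "x > 0" and yp: "y > 0"
  shows "\<exists>t\<in>H. t > 0 \<and> (\<exists>m n::nat. 0 < m \<and> 0 < n \<and> x = real m * t \<and> y = real n * t)"
proof -
  have S: "add_subgroup H" using R by (simp add: rank_one_subgroup_def)
  obtain Q and \<phi> :: "real \<Rightarrow> rat" where bij: "bij_betw \<phi> H Q"
    and add: "\<forall>x\<in>H. \<forall>y\<in>H. \<phi> (x + y) = \<phi> x + \<phi> y"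
    using R unfolding rank_one_subgroup_def by blast
  have inj: "inj_on \<phi> H" using bij by (simp add: bij_betw_def)
  have z: "\<phi> 0 = 0" using hom_int_mult[OF S xH add, of 0] by simp
  have zH: "0 \<in> H" using S by (simp add: add_subgroup_def)
  have r1: "\<phi> x \<noteq> 0" using inj xH zH z xp by (metis inj_on_def less_irrefl)
  have r2: "\<phi> y \<noteq> 0" using inj yH zH z yp by (metis inj_on_def less_irrefl)
  obtain p1 q1 where pq1: "quotient_of (\<phi> x) = (p1, q1)" by fastforce
  obtain p2 q2 where pq2: "quotient_of (\<phi> y) = (p2, q2)" by fastforce
  have e1: "\<phi> x = of_int p1 / of_int q1" using quotient_of_div[OF pq1] .
  have e2: "\<phi> y = of_int p2 / of_int q2" using quotient_of_div[OF pq2] .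
  have q1p: "q1 > 0" using quotient_of_denom_pos[OF pq1] .
  have q2p: "q2 > 0" using quotient_of_denom_pos[OF pq2] .
  have p1n: "p1 \<noteq> 0" using e1 r1 by auto
  have p2n: "p2 \<noteq> 0" using e2 r2 by auto
  define A where "A = p1 * q2"
  define B where "B = p2 * q1"
  have "of_int B * \<phi> x = of_int A * \<phi> y"
    unfolding A_def B_def e1 e2 using q1p q2p by (simp add: field_simps)
  then have "\<phi> (of_int B * x) = \<phi> (of_int A * y)"
    using hom_int_mult[OF S xH add] hom_int_mult[OF S yH add] by simp
  then have BA: "of_int B * x = of_int A * y"
    using inj sub_int_mult[OF S xH] sub_int_mult[OF S yH] by (meson inj_on_def)
  have An: "A \<noteq> 0" using p1n q2p by (simp add: A_def)
  define c :: rat where "c = of_int B / of_int A"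
  have cxy: "real_of_rat c = y / x" unfolding c_def using BA An xp
    by (simp add: of_rat_divide field_simps)
  have cp: "c > 0" using cxy xp yp by (metis divide_pos_pos zero_less_of_rat_iff)
  obtain n m where nm: "quotient_of c = (n, m)" by fastforce
  have ce: "c = of_int n / of_int m" using quotient_of_div[OF nm] .
  have mp: "m > 0" using quotient_of_denom_pos[OF nm] .
  have cop: "coprime n m" using quotient_of_coprime[OF nm] .
  have np: "n > 0" using cp ce mp by (simp add: zero_less_divide_iff)
  have yxr: "y / x = of_int n / of_int m"
    using cxy ce by (simp add: of_rat_divide)
  then have ynm: "y * of_int m = x * of_int n" using xp mp by (simp add: field_simps)
  obtain u v where uv: "u * m + v * n = gcd m n" using bezout_int by blast
  have g1: "gcd m n = 1" using cop by (simp add: coprime_commute)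
  define t where "t = x / of_int m"
  have xt: "x = of_int m * t" using mp by (simp add: t_def)
  have yt: "y = of_int n * t" using ynm mp by (simp add: t_def field_simps)
  have "t = of_int (u * m + v * n) * t" using uv g1 by simp
  also have "\<dots> = of_int u * x + of_int v * y" by (simp add: xt yt algebra_simps)
  finally have tH: "t \<in> H" using sub_int_mult[OF S xH, of u] sub_int_mult[OF S yH, of v] S
    by (simp add: add_subgroup_def)
  have tp: "t > 0" using xp mp by (simp add: t_def)
  show ?thesis
    apply (rule bexI[OF _ tH])
    apply (rule conjI[OF tp])
    apply (rule exI[of _ "nat m"], rule exI[of _ "nat n"])
    using mp np xt yt by simp
qed

lemma nbhd:
  assumes "C_obj W" "z \<in> W" "z > 0"
  shows "\<exists>d>0. d \<le> z \<and> {z-d<..<z+d} \<subseteq> W"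
  using assms unfolding C_obj_def
proof (elim disjE exE conjE)
  assume "W = {}" then show ?thesis using assms by simp
next
  fix a b assume W: "W = {a<..<b}" "0 \<le> a"
  show ?thesis
    apply (rule exI[of _ "min (z - a) (b - z)"]) using assms W by auto
next
  fix b assume W: "W = {0..<b}"
  show ?thesis
    apply (rule exI[of _ "min z (b - z)"]) using assms W by auto
qed

lemma interval_obj: "0 \<le> a \<Longrightarrow> a < b \<Longrightarrow> C_obj {a<..<b}"
  unfolding C_obj_def by blast

lemma hom1: "V \<subseteq> W \<Longrightarrow> 1 \<in> C_hom V W"
  unfolding C_hom_def by auto

lemma nat_mult_H: "add_subgroup (H::real set) \<Longrightarrow> x \<in> H \<Longrightarrow> real n * x \<in> H"
  using sub_int_mult[of H x "int n"] by simp

lemma part_functor: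
  assumes "add_subgroup H"
  shows "C_functor (FH_obj H) FH_mor"
  unfolding C_functor_def
proof (intro conjI allI impI)
  fix V W n x assume "C_obj V" "C_obj W" "n \<in> C_hom V W" "x \<in> FH_obj H V"
  then show "FH_mor n V W x \<in> FH_obj H W"
    using nat_mult_H[OF assms] unfolding C_hom_def FH_obj_def FH_mor_def
    by (auto split: if_splits)
next
  fix V x show "FH_mor 1 V V x = x" by (simp add: FH_mor_def)
next
  fix U V W n m x assume "x \<in> FH_obj H U"
  then show "FH_mor (C_comp U m n) U W x = FH_mor m V W (FH_mor n U V x)"
    unfolding C_comp_def FH_mor_def FH_obj_def by auto
qed

lemma part_cont: "C_continuous (FH_obj H) FH_mor"
  unfolding C_continuous_def FH_obj_def FH_mor_def by auto

lemma part_flat: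
  assumes R: "rank_one_subgroup H" and nt: "H \<noteq> {0}"
  shows "C_flat (FH_obj H) FH_mor"
  unfolding C_flat_def
proof (intro conjI allI impI)
  have S: "add_subgroup H" using R by (simp add: rank_one_subgroup_def)
  obtain h where h: "h \<in> H" "h \<noteq> 0" using nt S by (auto simp: add_subgroup_def)
  define h' where "h' = \<bar>h\<bar>"
  have h': "h' \<in> H" "h' > 0" using h S by (auto simp: h'_def add_subgroup_def abs_if)
  show "\<exists>C. C_obj C \<and> FH_obj H C \<noteq> {}"
    apply (rule exI[of _ "{0<..<h'+1}"]) using h' interval_obj[of 0 "h'+1"]
  proof (intro conjI)
    have "h' \<in> {0<..<h'+1} \<inter> H \<inter> {0<..}" using h' by auto
    then show "FH_obj H {0<..<h' + 1} \<noteq> {}" unfolding FH_obj_def by blast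
  qed simp
next
  fix C1 C2 a1 a2 assume C1: "C_obj C1" and C2: "C_obj C2"
    and a1: "a1 \<in> FH_obj H C1" and a2: "a2 \<in> FH_obj H C2"
  have a1': "a1 \<in> C1" "a1 \<in> H" "a1 > 0" using a1 by (auto simp: FH_obj_def)
  have a2': "a2 \<in> C2" "a2 \<in> H" "a2 > 0" using a2 by (auto simp: FH_obj_def)
  obtain t m n where t: "t \<in> H" "t > 0" "0 < m" "0 < n" "a1 = real m * t" "a2 = real n * t"
    using common_div[OF R a1'(2) a2'(2) a1'(3) a2'(3)] by blast
  obtain d1 where d1: "d1 > 0" "d1 \<le> a1" "{a1-d1<..<a1+d1} \<subseteq> C1" using nbhd[OF C1 a1'(1,3)] by blast
  obtain d2 where d2: "d2 > 0" "d2 \<le> a2" "{a2-d2<..<a2+d2} \<subseteq> C2" using nbhd[OF C2 a2'(1,3)] by blast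
  define e where "e = min (d1 / m) (d2 / n)"
  have ep: "e > 0" using d1 d2 t by (simp add: e_def)
  have e1: "m * e \<le> d1" using t by (simp add: e_def min_def field_simps)
  have e2: "n * e \<le> d2" using t by (simp add: e_def min_def field_simps)
  have "real m * e \<le> real m * t" using e1 d1(2) t(5) by simp
  then have et: "e \<le> t" using t(3) by simp
  define C where "C = {t - e<..<t + e}"
  have Cobj: "C_obj C" unfolding C_def using interval_obj et ep by simp
  have tC: "t \<in> FH_obj H C" using t ep by (simp add: C_def FH_obj_def)
  have h1: "m \<in> C_hom C C1"
  proof -
    have "(\<lambda>x. real m * x) ` C \<subseteq> {a1-d1<..<a1+d1}"
    proof
      fix y assume "y \<in> (\<lambda>x. real m * x) ` C"
      then obtain x where x: "x \<in> C" "y = real m * x" by blast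
      have "\<bar>x - t\<bar> < e" using x by (auto simp: C_def)
      then have "real m * \<bar>x - t\<bar> < real m * e" using t by simp
      moreover have "real m * \<bar>x - t\<bar> = \<bar>y - a1\<bar>"
        using x(2) t by (simp add: abs_mult right_diff_distrib[symmetric])
      ultimately have "\<bar>y - a1\<bar> < d1" using e1 by linarith
      then show "y \<in> {a1-d1<..<a1+d1}" by auto
    qed
    moreover have "C \<noteq> {}" using tC by (auto simp: FH_obj_def)
    ultimately show ?thesis using d1(3) t(3) unfolding C_hom_def by auto
  qed
  have h2: "n \<in> C_hom C C2"
  proof -
    have "(\<lambda>x. real n * x) ` C \<subseteq> {a2-d2<..<a2+d2}"
    proof
      fix y assume "y \<in> (\<lambda>x. real n * x) ` C"
      then obtain x where x: "x \<in> C" "y = real n * x" by blast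
      have "\<bar>x - t\<bar> < e" using x by (auto simp: C_def)
      then have "real n * \<bar>x - t\<bar> < real n * e" using t by simp
      moreover have "real n * \<bar>x - t\<bar> = \<bar>y - a2\<bar>"
        using x(2) t by (simp add: abs_mult right_diff_distrib[symmetric])
      ultimately have "\<bar>y - a2\<bar> < d2" using e2 by linarith
      then show "y \<in> {a2-d2<..<a2+d2}" by auto
    qed
    moreover have "C \<noteq> {}" using tC by (auto simp: FH_obj_def)
    ultimately show ?thesis using d2(3) t(4) unfolding C_hom_def by auto
  qed
  show "\<exists>C a u1 u2. C_obj C \<and> a \<in> FH_obj H C \<and> u1 \<in> C_hom C C1 \<and> u2 \<in> C_hom C C2 \<and>
            FH_mor u1 C C1 a = a1 \<and> FH_mor u2 C C2 a = a2"
    apply (rule exI[of _ C], rule exI[of _ t], rule exI[of _ m], rule exI[of _ n])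
    using Cobj tC h1 h2 t(5,6) by (simp add: FH_mor_def)
next
  fix C D u v a assume C: "C_obj C" and "C_obj D" and u: "u \<in> C_hom C D" and v: "v \<in> C_hom C D"
    and a: "a \<in> FH_obj H C" and eq: "FH_mor u C D a = FH_mor v C D a"
  have ap: "a > 0" "a \<in> C" using a by (auto simp: FH_obj_def)
  have uv: "u = v" using eq ap by (simp add: FH_mor_def)
  show "\<exists>B b w. C_obj B \<and> b \<in> FH_obj H B \<and> w \<in> C_hom B C \<and>
            C_comp B u w = C_comp B v w \<and> FH_mor w B C b = a"
    apply (rule exI[of _ C], rule exI[of _ a], rule exI[of _ 1])
    using C a uv hom1[of C C] by (simp add: FH_mor_def)
qed

lemma iso_id:
  assumes bij: "\<forall>V. C_obj V \<longrightarrow> bij_betw (\<eta> V) (FH_obj H V) (FH_obj H' V)"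
    and nat: "\<forall>V W n x. C_obj V \<longrightarrow> C_obj W \<longrightarrow> n \<in> C_hom V W \<longrightarrow> x \<in> FH_obj H V \<longrightarrow>
            \<eta> W (FH_mor n V W x) = FH_mor n V W (\<eta> V x)"
    and W: "C_obj W" and x: "x \<in> FH_obj H W"
  shows "\<eta> W x = x"
proof (rule ccontr)
  assume ne: "\<eta> W x \<noteq> x"
  have xW: "x \<in> W" "x > 0" "x \<in> H" using x by (auto simp: FH_obj_def)
  obtain d where d: "d > 0" "d \<le> x" "{x-d<..<x+d} \<subseteq> W" using nbhd[OF W xW(1,2)] by blast
  define e where "e = min d \<bar>\<eta> W x - x\<bar>"
  have ep: "e > 0" using d ne by (simp add: e_def)
  have ed: "e \<le> d" by (simp add: e_def)
  define V where "V = {x-e<..<x+e}"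
  have Vobj: "C_obj V" unfolding V_def using interval_obj ep ed d by simp
  have VW: "V \<subseteq> W" using d ed unfolding V_def by auto
  have xV: "x \<in> FH_obj H V" using xW ep by (simp add: V_def FH_obj_def)
  have "\<eta> W (FH_mor 1 V W x) = FH_mor 1 V W (\<eta> V x)"
    using nat Vobj W hom1[OF VW] xV by blast
  then have eq: "\<eta> W x = \<eta> V x" by (simp add: FH_mor_def)
  have "\<eta> V x \<in> FH_obj H' V" using bij Vobj xV by (meson bij_betwE)
  then have "\<eta> W x \<in> V" using eq by (simp add: FH_obj_def)
  then have "\<bar>\<eta> W x - x\<bar> < e" by (auto simp: V_def)
  then show False by (simp add: e_def)
qed

lemma pos_sub:
  assumes "add_subgroup (H::real set)" "add_subgroup H'" "\<And>z. z \<in> H \<Longrightarrow> z > 0 \<Longrightarrow> z \<in> H'"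
  shows "H \<subseteq> H'"
proof
  fix z assume z: "z \<in> H"
  consider "z = 0" | "z > 0" | "z < 0" by linarith
  then show "z \<in> H'"
  proof cases
    case 1 then show ?thesis using assms(2) by (simp add: add_subgroup_def)
  next
    case 2 then show ?thesis using assms(3) z by blast
  next
    case 3
    then have "-z \<in> H" using z assms(1) by (simp add: add_subgroup_def)
    then have "-z \<in> H'" using assms(3) 3 by simp
    then show ?thesis using assms(2) unfolding add_subgroup_def by force
  qed
qed

lemma part_inj:
  assumes S: "add_subgroup H" "add_subgroup H'" and iso: "C_nat_iso (FH_obj H) FH_mor (FH_obj H') FH_mor"
  shows "H = H'"
proof -
  obtain \<eta> where bij: "\<forall>V. C_obj V \<longrightarrow> bij_betw (\<eta> V) (FH_obj H V) (FH_obj H' V)"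
    and nat: "\<forall>V W n x. C_obj V \<longrightarrow> C_obj W \<longrightarrow> n \<in> C_hom V W \<longrightarrow> x \<in> FH_obj H V \<longrightarrow>
            \<eta> W (FH_mor n V W x) = FH_mor n V W (\<eta> V x)"
    using iso unfolding C_nat_iso_def by blast
  have 1: "H \<subseteq> H'"
  proof (rule pos_sub[OF S])
    fix z assume z: "z \<in> H" "z > 0"
    define W where "W = {0<..<z+1}"
    have Wo: "C_obj W" unfolding W_def using interval_obj z by simp
    have zW: "z \<in> FH_obj H W" using z by (simp add: W_def FH_obj_def)
    have "\<eta> W z \<in> FH_obj H' W" using bij Wo zW by (meson bij_betwE)
    then show "z \<in> H'" using iso_id[OF bij nat Wo zW] by (simp add: FH_obj_def)
  qed
  have 2: "H' \<subseteq> H"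
  proof (rule pos_sub[OF S(2,1)])
    fix z assume z: "z \<in> H'" "z > 0"
    define W where "W = {0<..<z+1}"
    have Wo: "C_obj W" unfolding W_def using interval_obj z by simp
    have zW: "z \<in> FH_obj H' W" using z by (simp add: W_def FH_obj_def)
    obtain x where x: "x \<in> FH_obj H W" "\<eta> W x = z"
    proof -
      have "\<eta> W ` FH_obj H W = FH_obj H' W" using bij Wo unfolding bij_betw_def by blast
      then show ?thesis using zW that by (metis imageE)
    qed
    then show "z \<in> H" using iso_id[OF bij nat Wo x(1)] by (simp add: FH_obj_def)
  qed
  show ?thesis using 1 2 by blast
qed

theorem proposition3p3:
  shows "(\<forall>H. rank_one_subgroup H \<and> H \<noteq> {0} \<longrightarrow>
            C_functor (FH_obj H) FH_mor \<and> C_flat (FH_obj H) FH_mor \<and> C_continuous (FH_obj H) FH_mor)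
       \<and> (\<forall>H H'. rank_one_subgroup H \<and> H \<noteq> {0} \<and> rank_one_subgroup H' \<and> H' \<noteq> {0} \<and>
            C_nat_iso (FH_obj H) FH_mor (FH_obj H') FH_mor \<longrightarrow> H = H')"
  using part_functor part_flat part_cont part_inj by (auto simp: rank_one_subgroup_def)

end
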